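(* Let $d\geq 3$. Let $\mathcal{H}_A=\mathbb{C}^2\otimes\mathbb{C}^d$ and $\mathcal{H}_B=\mathbb{C}^2\otimes\mathbb{C}^d$, and regard $\mathcal{H}_A\otimes\mathcal{H}_B$ as $(\mathbb{C}^2\otimes\mathbb{C}^2)\otimes(\mathbb{C}^d\otimes\mathbb{C}^d)$, where the first pair consists of the qubit factors of Alice and Bob and the second pair of the qudit factors. For $x,y,z\geq 0$ let $$\rho=\tilde Q_2\otimes\tilde Q+x\,P_2\otimes\tilde Q+y\,\tilde Q_2\otimes P+z\,P_2\otimes P.$$ If $z>\frac{2x}{d-2}$, then $\rho$ is entangled (not separable) with respect to the split $\mathcal{H}_A|\mathcal{H}_B$.
   Context: $P_2=|\Phi_2\rangle\langle\Phi_2|$ with $|\Phi_2\rangle=\frac{1}{\sqrt2}(|00\rangle+|11\rangle)\in\mathbb{C}^2\otimes\mathbb{C}^2$, and $\tilde Q_2=(\mathbb{1}-P_2)/3$. $P=|\Phi_d\rangle\langle\Phi_d|$ with $|\Phi_d\rangle=\frac{1}{\sqrt d}\sum_{i=0}^{d-1}|ii\rangle\in\mathbb{C}^d\otimes\mathbb{C}^d$, and $\tilde Q=(\mathbb{1}-P)/(d^2-1)$. A positive semidefinite operator is separable if it is a nonnegative combination of product operators $\rho^A\otimes\rho^B$ with $\rho^A,\rho^B\geq 0$. *)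

theory Defs
  imports Complex_Main "Jordan_Normal_Form.Matrix"
begin

definition psd :: "complex mat \<Rightarrow> bool" where
  "psd M \<longleftrightarrow> dim_row M = dim_col M \<and>
     (\<forall>v :: nat \<Rightarrow> complex.
        let q = (\<Sum>i<dim_row M. \<Sum>j<dim_row M. cnj (v i) * M $$ (i, j) * v j)
        in q \<in> \<real> \<and> 0 \<le> Re q)"

definition kron :: "complex mat \<Rightarrow> complex mat \<Rightarrow> complex mat" where
  "kron A B = mat (dim_row A * dim_row B) (dim_col A * dim_col B)
     (\<lambda>(i, j). A $$ (i div dim_row B, j div dim_col B) * B $$ (i mod dim_row B, j mod dim_col B))"

(* Projector onto the maximally entangled state |Phi_n> = (1/sqrt n) sum_i |ii> in C^n (x) C^n *)
definition maxent_proj :: "nat \<Rightarrow> complex mat" where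
  "maxent_proj n = mat (n * n) (n * n)
     (\<lambda>(r, c). if r mod (Suc n) = 0 \<and> c mod (Suc n) = 0 then 1 / of_nat n else 0)"

definition Qtilde :: "nat \<Rightarrow> complex mat" where
  "Qtilde n = (1 / (of_nat (n * n) - 1)) \<cdot>\<^sub>m (1\<^sub>m (n * n) - maxent_proj n)"

(* Reordering (C^m (x) C^m) (x) (C^n (x) C^n)  ~>  (C^m (x) C^n) (x) (C^m (x) C^n):
   index ((a*n+k)*m+b)*n+l of the target corresponds to (a*m+b)*(n*n)+(k*n+l) of the source *)
definition reorder_idx :: "nat \<Rightarrow> nat \<Rightarrow> nat \<Rightarrow> nat" where
  "reorder_idx m n i =
     (let l = i mod n; b = (i div n) mod m; k = (i div (n * m)) mod n; a = i div (n * m * n)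
      in (a * m + b) * (n * n) + (k * n + l))"

definition reorder :: "nat \<Rightarrow> nat \<Rightarrow> complex mat \<Rightarrow> complex mat" where
  "reorder m n M = mat (m * n * (m * n)) (m * n * (m * n))
     (\<lambda>(r, c). M $$ (reorder_idx m n r, reorder_idx m n c))"

(* the state rho, as an operator on H_A (x) H_B with H_A = H_B = C^2 (x) C^d *)
definition rho :: "nat \<Rightarrow> real \<Rightarrow> real \<Rightarrow> real \<Rightarrow> complex mat" where
  "rho d x y z = reorder 2 d
     (kron (Qtilde 2) (Qtilde d)
      + complex_of_real x \<cdot>\<^sub>m kron (maxent_proj 2) (Qtilde d)
      + complex_of_real y \<cdot>\<^sub>m kron (Qtilde 2) (maxent_proj d)
      + complex_of_real z \<cdot>\<^sub>m kron (maxent_proj 2) (maxent_proj d))"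

definition separable :: "nat \<Rightarrow> nat \<Rightarrow> complex mat \<Rightarrow> bool" where
  "separable na nb M \<longleftrightarrow> psd M \<and> M \<in> carrier_mat (na * nb) (na * nb) \<and>
     (\<exists>(K::nat) (p :: nat \<Rightarrow> real) (A :: nat \<Rightarrow> complex mat) (B :: nat \<Rightarrow> complex mat).
        (\<forall>j<K. 0 \<le> p j \<and> A j \<in> carrier_mat na na \<and> psd (A j)
                 \<and> B j \<in> carrier_mat nb nb \<and> psd (B j)) \<and>
        M = mat (na * nb) (na * nb)
              (\<lambda>rc. \<Sum>j<K. complex_of_real (p j) * kron (A j) (B j) $$ rc))"

end

theory Submission
  imports Defs
begin


definition sf :: "nat \<Rightarrow> (nat \<Rightarrow> nat \<Rightarrow> complex) \<Rightarrow> (nat \<Rightarrow> complex) \<Rightarrow> (nat \<Rightarrow> complex) \<Rightarrow> complex" where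
  "sf n M u v = (\<Sum>i<n. \<Sum>j<n. cnj (u i) * M i j * v j)"

definition psdf :: "nat \<Rightarrow> (nat \<Rightarrow> nat \<Rightarrow> complex) \<Rightarrow> bool" where
  "psdf n M \<longleftrightarrow> (\<forall>v. sf n M v v \<in> \<real> \<and> 0 \<le> Re (sf n M v v))"

lemma sf_comb:
  "sf n M (\<lambda>i. a * u i + b * w i) (\<lambda>i. a' * u' i + b' * w' i) =
   cnj a * a' * sf n M u u' + cnj a * b' * sf n M u w' + cnj b * a' * sf n M w u' + cnj b * b' * sf n M w w'"
  unfolding sf_def by (simp add: algebra_simps sum.distrib sum_distrib_left)

lemma ifm1: "x * (if P then 1 else 0) = (if P then x else (0::complex))" by simp
lemma ifm2: "(if P then 1 else 0) * x = (if P then x else (0::complex))" by simp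
lemma ifc: "cnj (if P then 1 else 0) = (if P then 1 else (0::complex))" by simp

lemma sf_delta:
  assumes "i < n" "j < n"
  shows "sf n M (\<lambda>k. if k = i then 1 else 0) (\<lambda>k. if k = j then 1 else 0) = M i j"
  using assms unfolding sf_def by (simp only: ifm1 ifm2 ifc) (simp add: sum.delta)

lemma qf_two:
  assumes "i < n" "j < n"
  shows "sf n M (\<lambda>k. a * (if k = i then 1 else 0) + b * (if k = j then 1 else 0))
     (\<lambda>k. a * (if k = i then 1 else 0) + b * (if k = j then 1 else 0)) =
    cnj a * a * M i i + cnj a * b * M i j + cnj b * a * M j i + cnj b * b * M j j"
  unfolding sf_comb using assms by (simp add: sf_delta)

lemma herm:
  assumes "psdf n M" "i < n" "j < n"
  shows "M j i = cnj (M i j)"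
proof -
  let ?v = "\<lambda>a b k. a * (if k = i then 1 else 0) + b * (if k = j then 1 else 0)"
  have r: "\<And>a b. sf n M (?v a b) (?v a b) \<in> \<real>"
    using assms(1) unfolding psdf_def by blast
  note qs = qf_two[OF assms(2,3)]
  from r[of 1 1] r[of 1 \<i>] r[of 1 0] r[of 0 1] show ?thesis unfolding qs
    by (simp add: complex_is_Real_iff complex_eq_iff)
qed

lemma chol:
  "psdf n M \<Longrightarrow> \<exists>V. \<forall>i<n. \<forall>j<n. M i j = (\<Sum>m<n. V m i * cnj (V m j))"
proof (induction n arbitrary: M)
  case 0
  show ?case by simp
next
  case (Suc n)
  have P: "psdf (Suc n) M" by fact
  let ?v = "\<lambda>i j a b k. a * (if k = i then 1 else 0) + b * (if k = j then 1 else (0::complex))"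
  define c where "c = M n n"
  have hm: "\<And>i j. i < Suc n \<Longrightarrow> j < Suc n \<Longrightarrow> M j i = cnj (M i j)"
    using herm[OF P] by blast
  have pv: "\<And>u. sf (Suc n) M u u \<in> \<real> \<and> 0 \<le> Re (sf (Suc n) M u u)"
    using P unfolding psdf_def by blast
  have cR: "c \<in> \<real>" "0 \<le> Re c"
    using pv[of "?v n n 1 0"] unfolding qf_two[of n "Suc n" n, OF lessI lessI] c_def by auto
  have cc: "cnj c = c" using cR(1) by (simp add: Reals_cnj_iff)
  have c0: "M i n = 0" if c: "c = 0" and i: "i < n" for i
  proof (rule ccontr)
    assume m: "M i n \<noteq> 0"
    have i': "i < Suc n" using i by simp
    define b where "b = - (M i i + 1) / M i n"
    have bm: "b * M i n = - (M i i + 1)" unfolding b_def using m by simp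
    have iR: "M i i \<in> \<real>" "0 \<le> Re (M i i)"
      using pv[of "?v i i 1 0"] unfolding qf_two[of i "Suc n" i, OF i' i'] by auto
    have "cnj b * M n i = cnj (b * M i n)" using hm[of i n] i by simp
    also have "\<dots> = - (M i i + 1)" unfolding bm using iR(1) by (simp add: Reals_cnj_iff)
    finally have bm2: "cnj b * M n i = - (M i i + 1)" .
    have "sf (Suc n) M (?v i n 1 b) (?v i n 1 b) = M i i + b * M i n + cnj b * M n i + cnj b * b * c"
      unfolding qf_two[of i "Suc n" n, OF i' lessI] by (simp add: c_def)
    also have "\<dots> = - M i i - 2" unfolding bm bm2 c by simp
    finally have "Re (sf (Suc n) M (?v i n 1 b) (?v i n 1 b)) = - Re (M i i) - 2" by simp
    with pv[of "?v i n 1 b"] iR(2) show False by linarith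
  qed
  define M' where "M' = (\<lambda>i j. M i j - M i n * M n j / c)"
  have P': "psdf n M'"
    unfolding psdf_def
  proof (intro allI)
    fix v :: "nat \<Rightarrow> complex"
    define w where "w = (\<Sum>j<n. M n j * v j)"
    define t where "t = - w / c"
    have s1: "(\<Sum>i<n. cnj (v i) * M i n) = cnj w"
      unfolding w_def cnj_sum by (intro sum.cong refl) (simp add: hm[of _ n])
    have e1: "sf (Suc n) M (v(n:=t)) (v(n:=t)) = sf n M v v + (\<Sum>i<n. cnj (v i) * M i n) * t
         + cnj t * w + cnj t * c * t"
      unfolding sf_def w_def c_def
      by (simp add: sum.distrib sum_distrib_left sum_distrib_right algebra_simps)
    have e2': "sf n M' v v = sf n M v v - (\<Sum>i<n. cnj (v i) * M i n) * w / c"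
      unfolding sf_def M'_def w_def
      by (simp add: sum_distrib_left sum_distrib_right algebra_simps sum_subtractf sum_divide_distrib)
    have e2: "sf n M' v v = sf n M v v - cnj w * w / c" using e2' s1 by simp
    have e3: "cnj w * t + cnj t * w + cnj t * c * t = - cnj w * w / c"
    proof (cases "c = 0")
      case True then show ?thesis unfolding t_def by simp
    next
      case False then show ?thesis unfolding t_def using cc by (simp add: field_simps)
    qed
    have "sf (Suc n) M (v(n:=t)) (v(n:=t)) = sf n M v v + (cnj w * t + cnj t * w + cnj t * c * t)"
      unfolding e1 s1 by (simp add: algebra_simps)
    also have "\<dots> = sf n M' v v" unfolding e3 e2 by simp
    finally have key: "sf (Suc n) M (v(n:=t)) (v(n:=t)) = sf n M' v v" .
    show "sf n M' v v \<in> \<real> \<and> 0 \<le> Re (sf n M' v v)"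
      using pv[of "v(n:=t)"] unfolding key .
  qed
  from Suc.IH[OF P'] obtain V' where V': "\<forall>i<n. \<forall>j<n. M' i j = (\<Sum>m<n. V' m i * cnj (V' m j))"
    by blast
  define sc where "sc = complex_of_real (sqrt (Re c))"
  have cre: "c = complex_of_real (Re c)" using cR(1) by (simp add: complex_is_Real_iff complex_eq_iff)
  have sc2: "sc * cnj sc = c" unfolding sc_def using cR(2)
    by (subst cre) (simp flip: of_real_mult)
  define V where "V = (\<lambda>m i. if m < n then (if i < n then V' m i else 0) else M i n / sc)"
  show ?case
  proof (intro exI allI impI)
    fix i j assume i: "i < Suc n" and j: "j < Suc n"
    have last: "V n i * cnj (V n j) = M i n * M n j / c"
      unfolding V_def using hm[of j n] j sc2 by (simp add: field_simps)
    have "(\<Sum>m<Suc n. V m i * cnj (V m j)) = (\<Sum>m<n. V m i * cnj (V m j)) + M i n * M n j / c"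
      using last by simp
    also have "(\<Sum>m<n. V m i * cnj (V m j)) = (if i < n \<and> j < n then M' i j else 0)"
      using V' unfolding V_def by auto
    finally have S: "(\<Sum>m<Suc n. V m i * cnj (V m j)) = (if i < n \<and> j < n then M' i j else 0) + M i n * M n j / c" .
    show "M i j = (\<Sum>m<Suc n. V m i * cnj (V m j))"
    proof (cases "c = 0")
      case True
      have "i < n \<Longrightarrow> M i n = 0" "j < n \<Longrightarrow> M n j = 0" using c0[OF True] hm[of j n] j by auto
      moreover have "M n n = 0" using True c_def by simp
      ultimately show ?thesis unfolding S M'_def using i j True
        by (auto simp: less_Suc_eq)
    next
      case False
      have "M n j = cnj (M j n)" using hm[of j n] j by simp
      show ?thesis unfolding S M'_def using i j False
        by (auto simp: less_Suc_eq c_def)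
    qed
  qed
qed

lemma sf_sum_left:
  "sf n M (\<lambda>i. \<Sum>k\<in>K. f k * u k i) v = (\<Sum>k\<in>K. cnj (f k) * sf n M (u k) v)"
  unfolding sf_def by (simp add: sum_distrib_left sum_distrib_right algebra_simps sum.swap[of _ K])

lemma sf_sum_right:
  "sf n M v (\<lambda>i. \<Sum>k\<in>K. f k * u k i) = (\<Sum>k\<in>K. f k * sf n M v (u k))"
  unfolding sf_def by (simp add: sum_distrib_left sum_distrib_right algebra_simps sum.swap[of _ K])

lemma sf_cong:
  assumes "\<And>i. i < n \<Longrightarrow> u i = u' i" "\<And>i. i < n \<Longrightarrow> v i = v' i"
  shows "sf n M u v = sf n M u' v'"
  unfolding sf_def using assms by (intro sum.cong refl) auto

lemma sgn_cmod: "sgn z * complex_of_real (cmod z) = (z::complex)"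
  by (cases "z = 0") (auto simp: sgn_div_norm scaleR_conv_of_real)

lemma cmod_sgn_le: "cmod (sgn (z::complex)) \<le> 1"
  by (cases "z = 0") (auto simp: sgn_div_norm norm_divide)

lemma pair_bound:
  assumes pos: "\<And>v. 0 \<le> Re (sf n M v v)"
  shows "Re (cnj p * q * sf n M u w + cnj q * p * sf n M w u)
     \<le> (cmod q)^2 * Re (sf n M u u) + (cmod p)^2 * Re (sf n M w w)"
proof -
  define a where "a = sgn p * complex_of_real (cmod q)"
  define b where "b = sgn q * complex_of_real (cmod p)"
  have ab: "cnj a * b = cnj p * q"
  proof -
    have "cnj a * b = cnj (sgn p * complex_of_real (cmod p)) * (sgn q * complex_of_real (cmod q))"
      unfolding a_def b_def by (simp add: algebra_simps)
    thus ?thesis by (simp add: sgn_cmod)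
  qed
  have ba: "cnj b * a = cnj q * p"
  proof -
    have "cnj b * a = cnj (sgn q * complex_of_real (cmod q)) * (sgn p * complex_of_real (cmod p))"
      unfolding a_def b_def by (simp add: algebra_simps)
    thus ?thesis by (simp add: sgn_cmod)
  qed
  have na: "(cmod a)^2 \<le> (cmod q)^2"
    unfolding a_def norm_mult using cmod_sgn_le[of p]
    by (simp add: power_mult_distrib mult_left_le_one_le power_le_one)
  have nb: "(cmod b)^2 \<le> (cmod p)^2"
    unfolding b_def norm_mult using cmod_sgn_le[of q]
    by (simp add: power_mult_distrib mult_left_le_one_le power_le_one)
  have "0 \<le> Re (sf n M (\<lambda>i. a * u i + (- b) * w i) (\<lambda>i. a * u i + (- b) * w i))"
    using pos by blast
  also have "\<dots> = Re (cnj a * a * sf n M u u + cnj b * b * sf n M w w)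
                 - Re (cnj a * b * sf n M u w + cnj b * a * sf n M w u)"
    unfolding sf_comb by simp
  also have "cnj a * a = complex_of_real ((cmod a)^2)" using complex_norm_square[of a] by (simp add: mult.commute)
  also have "cnj b * b = complex_of_real ((cmod b)^2)" using complex_norm_square[of b] by (simp add: mult.commute)
  finally have "Re (cnj p * q * sf n M u w + cnj q * p * sf n M w u)
       \<le> (cmod a)^2 * Re (sf n M u u) + (cmod b)^2 * Re (sf n M w w)"
    using ab ba by simp
  also have "\<dots> \<le> (cmod q)^2 * Re (sf n M u u) + (cmod p)^2 * Re (sf n M w w)"
    by (intro add_mono mult_right_mono na nb pos)
  finally show ?thesis .
qed

lemma lmax_tr:
  assumes pos: "\<And>v. 0 \<le> Re (sf n M v v)"
  shows "Re (sf n M (\<lambda>i. \<Sum>k<m. f k * u k i) (\<lambda>i. \<Sum>k<m. f k * u k i))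
     \<le> (\<Sum>k<m. (cmod (f k))^2) * (\<Sum>k<m. Re (sf n M (u k) (u k)))"
proof -
  define S where "S = (\<lambda>k k'. sf n M (u k) (u k'))"
  have e: "sf n M (\<lambda>i. \<Sum>k<m. f k * u k i) (\<lambda>i. \<Sum>k<m. f k * u k i)
      = (\<Sum>k<m. \<Sum>k'<m. cnj (f k) * f k' * S k k')"
    unfolding S_def by (simp add: sf_sum_left sf_sum_right sum_distrib_left algebra_simps)
  have sw: "(\<Sum>k<m. \<Sum>k'<m. Re (cnj (f k') * f k * S k' k)) = (\<Sum>k<m. \<Sum>k'<m. Re (cnj (f k) * f k' * S k k'))"
    by (rule sum.swap)
  have "2 * Re (\<Sum>k<m. \<Sum>k'<m. cnj (f k) * f k' * S k k')
      = (\<Sum>k<m. \<Sum>k'<m. Re (cnj (f k) * f k' * S k k' + cnj (f k') * f k * S k' k))"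
    using sw by (simp add: Re_sum sum.distrib)
  also have "\<dots> \<le> (\<Sum>k<m. \<Sum>k'<m. (cmod (f k'))^2 * Re (S k k) + (cmod (f k))^2 * Re (S k' k'))"
    unfolding S_def by (intro sum_mono pair_bound pos)
  also have "\<dots> = 2 * ((\<Sum>k<m. (cmod (f k))^2) * (\<Sum>k<m. Re (S k k)))"
  proof -
    have "(\<Sum>k<m. \<Sum>k'<m. (cmod (f k'))^2 * Re (S k k) + (cmod (f k))^2 * Re (S k' k'))
       = (\<Sum>k<m. Re (S k k) * (\<Sum>k'<m. (cmod (f k'))^2)) + (\<Sum>k<m. (cmod (f k))^2 * (\<Sum>k'<m. Re (S k' k')))"
      by (simp add: sum.distrib sum_distrib_left mult.commute)
    also have "\<dots> = 2 * ((\<Sum>k<m. (cmod (f k))^2) * (\<Sum>k<m. Re (S k k)))"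
      by (simp add: sum_distrib_right[symmetric] mult.commute)
    finally show ?thesis .
  qed
  finally show ?thesis unfolding e S_def by simp
qed


lemma sum_2d: "(\<Sum>i<2*d. f i) = (\<Sum>i<d. f i) + (\<Sum>i<d. f (d + i))" for f :: "nat \<Rightarrow> 'a::comm_monoid_add"
proof -
  have g: "sum f {a*d..<a*d+d} = (\<Sum>k<d. f (a*d+k))" for a
  proof -
    have "sum f {0+a*d..<d+a*d} = (\<Sum>k\<in>{0..<d}. f (k+a*d))" by (rule sum.shift_bounds_nat_ivl)
    thus ?thesis by (simp add: atLeast0LessThan add.commute)
  qed
  have "(\<Sum>m<2. sum f {m*d..<m*d+d}) = sum f {..<2*d}" by (rule sum.nat_group)
  then show ?thesis by (simp add: g numeral_2_eq_2)
qed


definition tensor :: "nat \<Rightarrow> complex \<Rightarrow> complex \<Rightarrow> (nat \<Rightarrow> complex) \<Rightarrow> nat \<Rightarrow> complex" where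
  "tensor d h0 h1 f x = (if x < d then h0 * f x else if x < 2*d then h1 * f (x - d) else 0)"

definition dlt :: "nat \<Rightarrow> nat \<Rightarrow> complex" where "dlt k m = (if m = k then 1 else 0)"

lemma cnj_self: "cnj z * z = complex_of_real ((cmod z)^2)"
  using complex_norm_square[of z] by (simp add: mult.commute)

lemma sum_tensor_dlt: "(\<lambda>x. \<Sum>k<d. f k * tensor d h0 h1 (dlt k) x) = tensor d h0 h1 f"
proof
  fix x
  show "(\<Sum>k<d. f k * tensor d h0 h1 (dlt k) x) = tensor d h0 h1 f x"
  proof (cases "x < d")
    case True
    have "(\<Sum>k<d. f k * tensor d h0 h1 (dlt k) x) = (\<Sum>k<d. if k = x then h0 * f x else 0)"
      by (intro sum.cong refl) (auto simp: tensor_def dlt_def True)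
    then show ?thesis using True by (simp add: tensor_def)
  next
    case False
    show ?thesis
    proof (cases "x < 2*d")
      case True
      have "(\<Sum>k<d. f k * tensor d h0 h1 (dlt k) x) = (\<Sum>k<d. if k = x - d then h1 * f (x - d) else 0)"
        by (intro sum.cong refl) (auto simp: tensor_def dlt_def True False)
      then show ?thesis using True False by (simp add: tensor_def)
    next
      case F2: False
      have "(\<Sum>k<d. f k * tensor d h0 h1 (dlt k) x) = (\<Sum>k<d. 0)"
        by (intro sum.cong refl) (auto simp: tensor_def dlt_def F2 False)
      then show ?thesis using F2 False by (simp add: tensor_def)
    qed
  qed
qed

lemma core:
  assumes pos: "\<And>v. 0 \<le> Re (sf (2*d) M v v)"
  shows "Re (sf (2*d) M (\<lambda>x. if x < d then g0 x else if x < 2*d then g1 (x - d) else 0)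
                          (\<lambda>x. if x < d then g0 x else if x < 2*d then g1 (x - d) else 0))
     \<le> 2 * (\<Sum>l<d. \<Sum>k<d. Re (sf (2*d) M (tensor d (g0 l) (g1 l) (dlt k)) (tensor d (g0 l) (g1 l) (dlt k))))"
proof -
  define D where "D = (\<Sum>l<d. cnj (g0 l) * g0 l)"
  define c where "c = (\<Sum>l<d. cnj (g0 l) * g1 l) / D"
  define w where "w = (\<lambda>l. g1 l - c * g0 l)"
  have orth: "(\<Sum>l<d. cnj (g0 l) * w l) = 0"
  proof (cases "D = 0")
    case True
    have "D = complex_of_real (\<Sum>l<d. (cmod (g0 l))^2)" unfolding D_def cnj_self by simp
    with True have "(\<Sum>l<d. (cmod (g0 l))^2) = 0" by (metis of_real_eq_0_iff)
    hence "\<forall>l\<in>{..<d}. (cmod (g0 l))^2 = 0" by (subst (asm) sum_nonneg_eq_0_iff) auto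
    hence "\<And>l. l < d \<Longrightarrow> g0 l = 0" by simp
    thus ?thesis by simp
  next
    case False
    have "(\<Sum>l<d. cnj (g0 l) * w l) = (\<Sum>l<d. cnj (g0 l) * g1 l) - c * D"
      unfolding w_def D_def by (simp add: algebra_simps sum_subtractf sum_distrib_left)
    also have "\<dots> = 0" unfolding c_def using False by simp
    finally show ?thesis .
  qed
  have orth2: "(\<Sum>l<d. cnj (w l) * g0 l) = 0"
  proof -
    have "cnj (\<Sum>l<d. cnj (g0 l) * w l) = (\<Sum>l<d. cnj (w l) * g0 l)" by (simp add: mult.commute)
    thus ?thesis using orth by simp
  qed
  define E where "E = (\<lambda>k. tensor d 1 c (dlt k))"
  define F where "F = (\<lambda>k. tensor d 0 1 (dlt k))"
  define U where "U = (\<lambda>x. \<Sum>k<d. g0 k * E k x)"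
  define W where "W = (\<lambda>x. \<Sum>k<d. w k * F k x)"
  have U': "U = tensor d 1 c g0" unfolding U_def E_def by (rule sum_tensor_dlt)
  have W': "W = tensor d 0 1 w" unfolding W_def F_def by (rule sum_tensor_dlt)
  have vUW: "(\<lambda>x. if x < d then g0 x else if x < 2*d then g1 (x - d) else 0) = (\<lambda>x. 1 * U x + 1 * W x)"
    unfolding U' W' tensor_def w_def by auto
  have par: "Re (sf (2*d) M (\<lambda>x. 1 * U x + 1 * W x) (\<lambda>x. 1 * U x + 1 * W x))
      \<le> 2 * Re (sf (2*d) M U U) + 2 * Re (sf (2*d) M W W)"
  proof -
    have eq: "sf (2*d) M (\<lambda>x. 1 * U x + 1 * W x) (\<lambda>x. 1 * U x + 1 * W x)
        + sf (2*d) M (\<lambda>x. 1 * U x + (-1) * W x) (\<lambda>x. 1 * U x + (-1) * W x)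
        = 2 * sf (2*d) M U U + 2 * sf (2*d) M W W"
      unfolding sf_comb by simp
    have "Re (sf (2*d) M (\<lambda>x. 1 * U x + 1 * W x) (\<lambda>x. 1 * U x + 1 * W x))
        + Re (sf (2*d) M (\<lambda>x. 1 * U x + (-1) * W x) (\<lambda>x. 1 * U x + (-1) * W x))
        = 2 * Re (sf (2*d) M U U) + 2 * Re (sf (2*d) M W W)"
      using arg_cong[OF eq, of Re] by simp
    moreover have "0 \<le> Re (sf (2*d) M (\<lambda>x. 1 * U x + (-1) * W x) (\<lambda>x. 1 * U x + (-1) * W x))"
      by (rule pos)
    ultimately show ?thesis by linarith
  qed
  have bU: "Re (sf (2*d) M U U) \<le> (\<Sum>k<d. (cmod (g0 k))^2) * (\<Sum>k<d. Re (sf (2*d) M (E k) (E k)))"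
    unfolding U_def by (rule lmax_tr[OF pos])
  have bW: "Re (sf (2*d) M W W) \<le> (\<Sum>k<d. (cmod (w k))^2) * (\<Sum>k<d. Re (sf (2*d) M (F k) (F k)))"
    unfolding W_def by (rule lmax_tr[OF pos])
  have T: "tensor d (g0 l) (g1 l) (dlt k) = (\<lambda>x. g0 l * E k x + w l * F k x)" for l k
    unfolding E_def F_def tensor_def w_def by (auto simp: algebra_simps)
  have perk: "(\<Sum>l<d. Re (sf (2*d) M (tensor d (g0 l) (g1 l) (dlt k)) (tensor d (g0 l) (g1 l) (dlt k))))
     = (\<Sum>l<d. (cmod (g0 l))^2) * Re (sf (2*d) M (E k) (E k)) + (\<Sum>l<d. (cmod (w l))^2) * Re (sf (2*d) M (F k) (F k))"
    for k
  proof -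
    have "(\<Sum>l<d. sf (2*d) M (tensor d (g0 l) (g1 l) (dlt k)) (tensor d (g0 l) (g1 l) (dlt k)))
       = (\<Sum>l<d. cnj (g0 l) * g0 l) * sf (2*d) M (E k) (E k) + (\<Sum>l<d. cnj (g0 l) * w l) * sf (2*d) M (E k) (F k)
         + (\<Sum>l<d. cnj (w l) * g0 l) * sf (2*d) M (F k) (E k) + (\<Sum>l<d. cnj (w l) * w l) * sf (2*d) M (F k) (F k)"
      unfolding T sf_comb by (simp add: sum.distrib sum_distrib_right)
    also have "\<dots> = complex_of_real (\<Sum>l<d. (cmod (g0 l))^2) * sf (2*d) M (E k) (E k)
         + complex_of_real (\<Sum>l<d. (cmod (w l))^2) * sf (2*d) M (F k) (F k)"
      unfolding orth orth2 cnj_self by simp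
    finally show ?thesis by (simp add: Re_sum[symmetric])
  qed
  have "2 * (\<Sum>l<d. \<Sum>k<d. Re (sf (2*d) M (tensor d (g0 l) (g1 l) (dlt k)) (tensor d (g0 l) (g1 l) (dlt k))))
     = 2 * (\<Sum>k<d. \<Sum>l<d. Re (sf (2*d) M (tensor d (g0 l) (g1 l) (dlt k)) (tensor d (g0 l) (g1 l) (dlt k))))"
    by (rule arg_cong[where f="\<lambda>x. 2*x"], rule sum.swap)
  also have "\<dots> = 2 * ((\<Sum>l<d. (cmod (g0 l))^2) * (\<Sum>k<d. Re (sf (2*d) M (E k) (E k))))
      + 2 * ((\<Sum>l<d. (cmod (w l))^2) * (\<Sum>k<d. Re (sf (2*d) M (F k) (F k))))"
    unfolding perk by (simp add: sum.distrib sum_distrib_left algebra_simps)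
  finally have R: "2 * (\<Sum>l<d. \<Sum>k<d. Re (sf (2*d) M (tensor d (g0 l) (g1 l) (dlt k)) (tensor d (g0 l) (g1 l) (dlt k))))
      = 2 * ((\<Sum>l<d. (cmod (g0 l))^2) * (\<Sum>k<d. Re (sf (2*d) M (E k) (E k))))
      + 2 * ((\<Sum>l<d. (cmod (w l))^2) * (\<Sum>k<d. Re (sf (2*d) M (F k) (F k))))" .
  show ?thesis unfolding vUW R using par bU bW by linarith
qed



definition phiF :: "nat \<Rightarrow> (nat \<times> nat \<Rightarrow> complex) \<Rightarrow> complex" where
  "phiF d E = (\<Sum>a<2. \<Sum>a'<2. \<Sum>k<d. \<Sum>l<d. E ((a*d+k)*(2*d)+(a*d+l), (a'*d+k)*(2*d)+(a'*d+l)))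
     - (\<Sum>a<2. \<Sum>a'<2. \<Sum>k<d. \<Sum>k'<d. E ((a*d+k)*(2*d)+(a*d+k), (a'*d+k')*(2*d)+(a'*d+k'))) / 2"

lemma swap3: "(\<Sum>k\<in>K. \<Sum>l\<in>L. \<Sum>m\<in>S. X k l m) = (\<Sum>m\<in>S. \<Sum>k\<in>K. \<Sum>l\<in>L. X k l m)"
proof -
  have "(\<Sum>k\<in>K. \<Sum>l\<in>L. \<Sum>m\<in>S. X k l m) = (\<Sum>k\<in>K. \<Sum>m\<in>S. \<Sum>l\<in>L. X k l m)"
    by (intro sum.cong refl) (rule sum.swap)
  also have "\<dots> = (\<Sum>m\<in>S. \<Sum>k\<in>K. \<Sum>l\<in>L. X k l m)" by (rule sum.swap)
  finally show ?thesis .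
qed

lemma swap5: "(\<Sum>a\<in>A1. \<Sum>b\<in>A2. \<Sum>k\<in>K. \<Sum>l\<in>L. \<Sum>m\<in>S. X a b k l m)
   = (\<Sum>m\<in>S. \<Sum>a\<in>A1. \<Sum>b\<in>A2. \<Sum>k\<in>K. \<Sum>l\<in>L. X a b k l m)"
proof -
  have "(\<Sum>a\<in>A1. \<Sum>b\<in>A2. \<Sum>k\<in>K. \<Sum>l\<in>L. \<Sum>m\<in>S. X a b k l m)
      = (\<Sum>a\<in>A1. \<Sum>b\<in>A2. \<Sum>m\<in>S. \<Sum>k\<in>K. \<Sum>l\<in>L. X a b k l m)"
    by (intro sum.cong refl) (rule swap3)
  also have "\<dots> = (\<Sum>m\<in>S. \<Sum>a\<in>A1. \<Sum>b\<in>A2. \<Sum>k\<in>K. \<Sum>l\<in>L. X a b k l m)" by (rule swap3)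
  finally show ?thesis .
qed

lemma phiF_sum: "phiF d (\<lambda>rc. \<Sum>j\<in>J. E j rc) = (\<Sum>j\<in>J. phiF d (E j))"
proof -
  have 1: "(\<Sum>a<2. \<Sum>a'<2. \<Sum>k<d. \<Sum>l<d. \<Sum>j\<in>J. E j ((a*d+k)*(2*d)+(a*d+l), (a'*d+k)*(2*d)+(a'*d+l)))
     = (\<Sum>j\<in>J. \<Sum>a<2. \<Sum>a'<2. \<Sum>k<d. \<Sum>l<d. E j ((a*d+k)*(2*d)+(a*d+l), (a'*d+k)*(2*d)+(a'*d+l)))"
    by (rule swap5)
  have 2: "(\<Sum>a<2. \<Sum>a'<2. \<Sum>k<d. \<Sum>k'<d. \<Sum>j\<in>J. E j ((a*d+k)*(2*d)+(a*d+k), (a'*d+k')*(2*d)+(a'*d+k')))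
     = (\<Sum>j\<in>J. \<Sum>a<2. \<Sum>a'<2. \<Sum>k<d. \<Sum>k'<d. E j ((a*d+k)*(2*d)+(a*d+k), (a'*d+k')*(2*d)+(a'*d+k')))"
    by (rule swap5)
  show ?thesis unfolding phiF_def 1 2 by (simp add: sum_subtractf sum_divide_distrib)
qed

lemma idx_bound:
  assumes "a < 2" "a' < 2" "k < d" "l < (d::nat)"
  shows "(a*d+k)*(2*d)+(a'*d+l) < (2*d)*(2*d)"
proof -
  have "a = 0 \<or> a = 1" "a' = 0 \<or> a' = 1" using assms by auto
  hence A: "a*d+k < 2*d" "a'*d+l < 2*d" using assms by auto
  then have "(a*d+k)*(2*d)+(a'*d+l) < (a*d+k)*(2*d) + 2*d" by simp
  also have "\<dots> = (a*d+k+1)*(2*d)" by simp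
  also have "\<dots> \<le> (2*d)*(2*d)" using A by (intro mult_right_mono) auto
  finally show ?thesis .
qed

lemma phiF_cong:
  assumes "\<And>r c. r < (2*d)*(2*d) \<Longrightarrow> c < (2*d)*(2*d) \<Longrightarrow> E (r, c) = E' (r, c)"
  shows "phiF d E = phiF d E'"
proof -
  have 1: "(\<Sum>a<2. \<Sum>a'<2. \<Sum>k<d. \<Sum>l<d. E ((a*d+k)*(2*d)+(a*d+l), (a'*d+k)*(2*d)+(a'*d+l)))
     = (\<Sum>a<2. \<Sum>a'<2. \<Sum>k<d. \<Sum>l<d. E' ((a*d+k)*(2*d)+(a*d+l), (a'*d+k)*(2*d)+(a'*d+l)))"
    by (intro sum.cong refl assms idx_bound) auto
  have 2: "(\<Sum>a<2. \<Sum>a'<2. \<Sum>k<d. \<Sum>k'<d. E ((a*d+k)*(2*d)+(a*d+k), (a'*d+k')*(2*d)+(a'*d+k')))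
     = (\<Sum>a<2. \<Sum>a'<2. \<Sum>k<d. \<Sum>k'<d. E' ((a*d+k)*(2*d)+(a*d+k), (a'*d+k')*(2*d)+(a'*d+k')))"
    by (intro sum.cong refl assms idx_bound) auto
  show ?thesis unfolding phiF_def 1 2 ..
qed


lemma kron_idx:
  assumes "A \<in> carrier_mat n n" "B \<in> carrier_mat n n" "i < n*n" "j < n*n"
  shows "kron A B $$ (i, j) = A $$ (i div n, j div n) * B $$ (i mod n, j mod n)"
  using assms unfolding kron_def by simp

lemma psd_psdf:
  assumes "psd A" "A \<in> carrier_mat n n"
  shows "psdf n (\<lambda>i j. A $$ (i, j))"
  using assms unfolding psd_def psdf_def sf_def Let_def by auto

lemma sf_split:
  "sf (2*d) M u v = (\<Sum>x<d. \<Sum>y<d. cnj (u x) * M x y * v y + cnj (u x) * M x (d+y) * v (d+y)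
      + cnj (u (d+x)) * M (d+x) y * v y + cnj (u (d+x)) * M (d+x) (d+y) * v (d+y))"
  unfolding sf_def sum_2d by (simp add: sum.distrib)

lemma sf_tensor_dlt:
  assumes "k < d"
  shows "sf (2*d) M (tensor d h0 h1 (dlt k)) (tensor d h0 h1 (dlt k)) =
    cnj h0 * M k k * h0 + cnj h0 * M k (d+k) * h1 + cnj h1 * M (d+k) k * h0 + cnj h1 * M (d+k) (d+k) * h1"
proof -
  have t: "tensor d h0 h1 (dlt k) = (\<lambda>x. h0 * (if x = k then 1 else 0) + h1 * (if x = d+k then 1 else 0))"
    using assms unfolding tensor_def dlt_def by (auto simp: fun_eq_iff)
  show ?thesis unfolding t sf_comb using assms by (simp add: sf_delta)
qed

lemma divmod_simp:
  assumes "x < (n::nat)"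
  shows "(y*n + x) div n = y" "(y*n + x) mod n = x"
  using assms by auto

lemma phiF_rank1:
  assumes "0 < d"
  shows "phiF d (\<lambda>(r, c). M (r div (2*d)) (c div (2*d)) * (b (r mod (2*d)) * cnj (b (c mod (2*d)))))
    = (\<Sum>l<d. \<Sum>k<d. sf (2*d) M (tensor d (cnj (b l)) (cnj (b (d+l))) (dlt k)) (tensor d (cnj (b l)) (cnj (b (d+l))) (dlt k)))
      - sf (2*d) M (\<lambda>x. if x < d then cnj (b x) else if x < 2*d then cnj (b (d + (x - d))) else 0)
                   (\<lambda>x. if x < d then cnj (b x) else if x < 2*d then cnj (b (d + (x - d))) else 0) / 2"
proof -
  have ds: "l < d \<Longrightarrow> l < 2*d" "l < d \<Longrightarrow> d + l < 2*d" for l by auto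
  have T1eq: "(\<Sum>l<d. \<Sum>k<d. sf (2*d) M (tensor d (cnj (b l)) (cnj (b (d+l))) (dlt k)) (tensor d (cnj (b l)) (cnj (b (d+l))) (dlt k)))
     = (\<Sum>k<d. \<Sum>l<d. M k k * (b l * cnj (b l)) + M (d+k) k * (b (d+l) * cnj (b l))
          + M k (d+k) * (b l * cnj (b (d+l))) + M (d+k) (d+k) * (b (d+l) * cnj (b (d+l))))"
  proof -
    have "(\<Sum>l<d. \<Sum>k<d. sf (2*d) M (tensor d (cnj (b l)) (cnj (b (d+l))) (dlt k)) (tensor d (cnj (b l)) (cnj (b (d+l))) (dlt k)))
       = (\<Sum>k<d. \<Sum>l<d. sf (2*d) M (tensor d (cnj (b l)) (cnj (b (d+l))) (dlt k)) (tensor d (cnj (b l)) (cnj (b (d+l))) (dlt k)))"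
      by (rule sum.swap)
    also have "\<dots> = (\<Sum>k<d. \<Sum>l<d. M k k * (b l * cnj (b l)) + M (d+k) k * (b (d+l) * cnj (b l))
          + M k (d+k) * (b l * cnj (b (d+l))) + M (d+k) (d+k) * (b (d+l) * cnj (b (d+l))))"
      by (intro sum.cong refl) (subst sf_tensor_dlt, simp, simp add: algebra_simps)
    finally show ?thesis .
  qed
  have T2eq: "sf (2*d) M (\<lambda>x. if x < d then cnj (b x) else if x < 2*d then cnj (b (d + (x - d))) else 0)
                   (\<lambda>x. if x < d then cnj (b x) else if x < 2*d then cnj (b (d + (x - d))) else 0)
    = (\<Sum>k<d. \<Sum>k'<d. M k k' * (b k * cnj (b k')) + M (d+k) k' * (b (d+k) * cnj (b k'))
          + M k (d+k') * (b k * cnj (b (d+k'))) + M (d+k) (d+k') * (b (d+k) * cnj (b (d+k'))))"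
    unfolding sf_split by (intro sum.cong refl) (simp add: algebra_simps)
  show ?thesis
    unfolding T1eq T2eq phiF_def
    by (simp add: numeral_2_eq_2 divmod_simp ds sum.distrib)
qed


lemma phi_kron_nonneg:
  assumes d: "0 < d" and A: "A \<in> carrier_mat (2*d) (2*d)" and B: "B \<in> carrier_mat (2*d) (2*d)"
    and pA: "psd A" and pB: "psd B"
  shows "0 \<le> Re (phiF d (\<lambda>rc. kron A B $$ rc))"
proof -
  from chol[OF psd_psdf[OF pB B]] obtain V where
    V: "\<forall>i<2*d. \<forall>j<2*d. B $$ (i, j) = (\<Sum>m<2*d. V m i * cnj (V m j))" by blast
  have pos: "\<And>v. 0 \<le> Re (sf (2*d) (\<lambda>i j. A $$ (i, j)) v v)"
    using psd_psdf[OF pA A] unfolding psdf_def by blast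
  define E where "E = (\<lambda>m (r, c). A $$ (r div (2*d), c div (2*d)) * (V m (r mod (2*d)) * cnj (V m (c mod (2*d)))))"
  have "phiF d (\<lambda>rc. kron A B $$ rc) = phiF d (\<lambda>rc. \<Sum>m<2*d. E m rc)"
  proof (rule phiF_cong)
    fix r c assume r: "r < 2*d*(2*d)" and c: "c < 2*d*(2*d)"
    have "r mod (2*d) < 2*d" "c mod (2*d) < 2*d" using d by auto
    then show "kron A B $$ (r, c) = (\<Sum>m<2*d. E m (r, c))"
      unfolding kron_idx[OF A B r c] E_def using V by (simp add: sum_distrib_left)
  qed
  also have "\<dots> = (\<Sum>m<2*d. phiF d (E m))" by (rule phiF_sum)
  finally have e: "phiF d (\<lambda>rc. kron A B $$ rc) = (\<Sum>m<2*d. phiF d (E m))" .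
  have each: "0 \<le> Re (phiF d (E m))" for m
  proof -
    have r1: "phiF d (E m) = (\<Sum>l<d. \<Sum>k<d. sf (2*d) (\<lambda>i j. A $$ (i, j)) (tensor d (cnj (V m l)) (cnj (V m (d+l))) (dlt k)) (tensor d (cnj (V m l)) (cnj (V m (d+l))) (dlt k)))
      - sf (2*d) (\<lambda>i j. A $$ (i, j)) (\<lambda>x. if x < d then cnj (V m x) else if x < 2*d then cnj (V m (d + (x - d))) else 0)
                   (\<lambda>x. if x < d then cnj (V m x) else if x < 2*d then cnj (V m (d + (x - d))) else 0) / 2"
      unfolding E_def using phiF_rank1[OF d, of "\<lambda>i j. A $$ (i, j)" "V m"] by simp
    have c1: "Re (sf (2*d) (\<lambda>i j. A $$ (i, j)) (\<lambda>x. if x < d then cnj (V m x) else if x < 2*d then cnj (V m (d + (x - d))) else 0)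
                   (\<lambda>x. if x < d then cnj (V m x) else if x < 2*d then cnj (V m (d + (x - d))) else 0))
      \<le> 2 * (\<Sum>l<d. \<Sum>k<d. Re (sf (2*d) (\<lambda>i j. A $$ (i, j)) (tensor d (cnj (V m l)) (cnj (V m (d+l))) (dlt k)) (tensor d (cnj (V m l)) (cnj (V m (d+l))) (dlt k))))"
      using core[OF pos, of "\<lambda>l. cnj (V m l)" "\<lambda>l. cnj (V m (d+l))"] by simp
    show ?thesis unfolding r1 using c1 by (simp add: Re_sum)
  qed
  show ?thesis unfolding e Re_sum by (intro sum_nonneg each)
qed



lemma sum2: "(\<Sum>a<(2::nat). f a) = f 0 + f 1"
  by (simp add: numeral_2_eq_2)

lemma reorder_idx_eq:
  assumes "a < 2" "b < 2" "k < d" "l < d"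
  shows "reorder_idx 2 d ((a*d+k)*(2*d)+(b*d+l)) = (a*2+b)*(d*d)+(k*d+l)"
proof -
  define i where "i = (a*d+k)*(2*d)+(b*d+l)"
  have i: "i = ((a*d+k)*2+b)*d + l" unfolding i_def by (simp add: algebra_simps)
  have d: "0 < d" using assms by auto
  have m1: "i mod d = l" unfolding i using assms by simp
  have d1: "i div d = (a*d+k)*2+b" unfolding i using assms by simp
  have t2: "(t*2+b) mod 2 = b" if "b<2" for t b :: nat using that by (simp add: add.commute[of "t*2"])
  have m2: "(i div d) mod 2 = b" unfolding d1 using t2[of b "a*d+k"] assms by simp
  have d2: "i div (d*2) = a*d+k" unfolding div_mult2_eq d1 using assms by simp
  have m3: "(i div (d*2)) mod d = k" unfolding d2 using assms by simp
  have d3: "i div (d*2*d) = a" unfolding div_mult2_eq[of i "d*2" d] d2 using assms by simp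
  show ?thesis unfolding i_def[symmetric] reorder_idx_def Let_def
    using m1 m2 m3 d3 by (simp add: mult.commute)
qed

lemma maxent_carrier: "maxent_proj n \<in> carrier_mat (n*n) (n*n)"
  unfolding maxent_proj_def by simp

lemma Qtilde_carrier: "Qtilde n \<in> carrier_mat (n*n) (n*n)"
  using maxent_carrier[of n] unfolding Qtilde_def carrier_mat_def by simp

lemma maxent_idx: "i < n*n \<Longrightarrow> j < n*n \<Longrightarrow>
  maxent_proj n $$ (i, j) = (if i mod Suc n = 0 \<and> j mod Suc n = 0 then 1 / of_nat n else 0)"
  unfolding maxent_proj_def by simp

lemma Qtilde_idx: "i < n*n \<Longrightarrow> j < n*n \<Longrightarrow>
  Qtilde n $$ (i, j) = (1 / (of_nat (n*n) - 1)) * ((if i = j then 1 else 0) - maxent_proj n $$ (i, j))"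
  unfolding Qtilde_def using maxent_carrier[of n] by simp

lemma kron_idx2:
  assumes "X \<in> carrier_mat 4 4" "Y \<in> carrier_mat (d*d) (d*d)" "p < 4" "p' < 4" "q < d*d" "q' < d*d"
  shows "kron X Y $$ (p*(d*d)+q, p'*(d*d)+q') = X $$ (p, p') * Y $$ (q, q')"
proof -
  have b: "p*(d*d)+q < 4*(d*d)" "p'*(d*d)+q' < 4*(d*d)"
  proof -
    have "p*(d*d)+q < p*(d*d) + d*d" using assms by simp
    also have "\<dots> = (p+1)*(d*d)" by simp
    also have "\<dots> \<le> 4*(d*d)" using assms by (intro mult_right_mono) auto
    finally show "p*(d*d)+q < 4*(d*d)" .
    have "p'*(d*d)+q' < p'*(d*d) + d*d" using assms by simp
    also have "\<dots> = (p'+1)*(d*d)" by simp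
    also have "\<dots> \<le> 4*(d*d)" using assms by (intro mult_right_mono) auto
    finally show "p'*(d*d)+q' < 4*(d*d)" .
  qed
  have "(p*(d*d)+q) div (d*d) = p" "(p*(d*d)+q) mod (d*d) = q"
       "(p'*(d*d)+q') div (d*d) = p'" "(p'*(d*d)+q') mod (d*d) = q'"
    using divmod_simp[of q "d*d" p] divmod_simp[of q' "d*d" p'] assms by auto
  then show ?thesis using assms b unfolding kron_def by simp
qed

lemma mod_diag:
  assumes "k < d" "l < d"
  shows "((k*d+l) mod Suc d = 0) = (l = k)"
proof (cases "l = k")
  case True
  have e: "k*d+k = Suc d * k" by simp
  have "(k*d+k) mod Suc d = 0" by (metis e mod_mult_self1_is_0 mod_mult_self2_is_0)
  then show ?thesis using True by simp
next
  case False
  show ?thesis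
  proof (cases "k < l")
    case True
    have e: "k*d+l = k * Suc d + (l - k)" using True by simp
    have "(k*d+l) mod Suc d = l - k" unfolding e using True assms by (intro divmod_simp(2)) simp
    then show ?thesis using True by simp
  next
    case F2: False
    then have kl: "l < k" using False by simp
    have e: "k*d+l = (k - 1) * Suc d + (Suc d + l - k)" using kl assms
    proof -
      obtain k' where k': "k = Suc k'" using kl by (cases k) auto
      show ?thesis unfolding k' using kl k' assms by (simp add: algebra_simps)
    qed
    have "(k*d+l) mod Suc d = Suc d + l - k" unfolding e using kl assms by (intro divmod_simp(2)) simp
    then show ?thesis using kl assms by simp
  qed
qed


lemma phiF_add: "phiF d (\<lambda>rc. E rc + F rc) = phiF d E + phiF d F"
  unfolding phiF_def by (simp add: sum.distrib algebra_simps add_divide_distrib)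

lemma phiF_scale: "phiF d (\<lambda>rc. c * E rc) = c * phiF d E"
  unfolding phiF_def by (simp add: sum_distrib_left algebra_simps)

lemma phiF_cong2:
  assumes "\<And>a a' k l k' l'. a < 2 \<Longrightarrow> a' < 2 \<Longrightarrow> k < d \<Longrightarrow> l < d \<Longrightarrow> k' < d \<Longrightarrow> l' < d \<Longrightarrow>
     E ((a*d+k)*(2*d)+(a*d+l), (a'*d+k')*(2*d)+(a'*d+l')) = E' ((a*d+k)*(2*d)+(a*d+l), (a'*d+k')*(2*d)+(a'*d+l'))"
  shows "phiF d E = phiF d E'"
proof -
  have 1: "(\<Sum>a<2. \<Sum>a'<2. \<Sum>k<d. \<Sum>l<d. E ((a*d+k)*(2*d)+(a*d+l), (a'*d+k)*(2*d)+(a'*d+l)))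
     = (\<Sum>a<2. \<Sum>a'<2. \<Sum>k<d. \<Sum>l<d. E' ((a*d+k)*(2*d)+(a*d+l), (a'*d+k)*(2*d)+(a'*d+l)))"
    by (intro sum.cong refl assms) auto
  have 2: "(\<Sum>a<2. \<Sum>a'<2. \<Sum>k<d. \<Sum>k'<d. E ((a*d+k)*(2*d)+(a*d+k), (a'*d+k')*(2*d)+(a'*d+k')))
     = (\<Sum>a<2. \<Sum>a'<2. \<Sum>k<d. \<Sum>k'<d. E' ((a*d+k)*(2*d)+(a*d+k), (a'*d+k')*(2*d)+(a'*d+k')))"
    by (intro sum.cong refl assms) auto
  show ?thesis unfolding phiF_def 1 2 ..
qed

lemma kdl: "k < d \<Longrightarrow> l < d \<Longrightarrow> k*d+l < d*(d::nat)"
proof -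
  assume a: "k < d" "l < d"
  have "k*d+l < k*d + d" using a by simp
  also have "\<dots> = (k+1)*d" by simp
  also have "\<dots> \<le> d*d" using a by (intro mult_right_mono) auto
  finally show ?thesis .
qed

definition sX :: "complex mat \<Rightarrow> complex" where
  "sX X = (\<Sum>a<2. \<Sum>a'<2. X $$ (a*2+a, a'*2+a'))"
definition t1 :: "nat \<Rightarrow> complex mat \<Rightarrow> complex" where
  "t1 d Y = (\<Sum>k<d. \<Sum>l<d. Y $$ (k*d+l, k*d+l))"
definition t2 :: "nat \<Rightarrow> complex mat \<Rightarrow> complex" where
  "t2 d Y = (\<Sum>k<d. \<Sum>k'<d. Y $$ (k*d+k, k'*d+k'))"

lemma phi_rk:
  assumes X: "X \<in> carrier_mat 4 4" and Y: "Y \<in> carrier_mat (d*d) (d*d)"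
  shows "phiF d (\<lambda>rc. kron X Y $$ (reorder_idx 2 d (fst rc), reorder_idx 2 d (snd rc)))
     = sX X * t1 d Y - sX X * t2 d Y / 2"
proof -
  have a4: "a < 2 \<Longrightarrow> a*2+a' < 4" if "a' < 2" for a a' :: nat using that by auto
  have 1: "(\<Sum>a<2. \<Sum>a'<2. \<Sum>k<d. \<Sum>l<d. kron X Y $$ (reorder_idx 2 d ((a*d+k)*(2*d)+(a*d+l)), reorder_idx 2 d ((a'*d+k)*(2*d)+(a'*d+l))))
     = (\<Sum>a<2. \<Sum>a'<2. \<Sum>k<d. \<Sum>l<d. X $$ (a*2+a, a'*2+a') * Y $$ (k*d+l, k*d+l))"
    by (intro sum.cong refl) (simp add: reorder_idx_eq kron_idx2[OF X Y] a4 kdl)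
  have 2: "(\<Sum>a<2. \<Sum>a'<2. \<Sum>k<d. \<Sum>k'<d. kron X Y $$ (reorder_idx 2 d ((a*d+k)*(2*d)+(a*d+k)), reorder_idx 2 d ((a'*d+k')*(2*d)+(a'*d+k'))))
     = (\<Sum>a<2. \<Sum>a'<2. \<Sum>k<d. \<Sum>k'<d. X $$ (a*2+a, a'*2+a') * Y $$ (k*d+k, k'*d+k'))"
    by (intro sum.cong refl) (simp add: reorder_idx_eq kron_idx2[OF X Y] a4 kdl)
  have p1: "sX X * t1 d Y = (\<Sum>a<2. \<Sum>a'<2. \<Sum>k<d. \<Sum>l<d. X $$ (a*2+a, a'*2+a') * Y $$ (k*d+l, k*d+l))"
    unfolding sX_def t1_def by (simp only: sum_distrib_right) (simp add: sum_distrib_left)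
  have p2: "sX X * t2 d Y = (\<Sum>a<2. \<Sum>a'<2. \<Sum>k<d. \<Sum>k'<d. X $$ (a*2+a, a'*2+a') * Y $$ (k*d+k, k'*d+k'))"
    unfolding sX_def t2_def by (simp only: sum_distrib_right) (simp add: sum_distrib_left)
  show ?thesis unfolding phiF_def fst_conv snd_conv 1 2 p1 p2 ..
qed


lemma sX_P2: "sX (maxent_proj 2) = 2"
  unfolding sX_def by (simp add: sum2 maxent_idx)

lemma sX_Q2: "sX (Qtilde 2) = 0"
  unfolding sX_def by (simp add: sum2 Qtilde_idx maxent_idx)

lemma P_diag: "k < d \<Longrightarrow> l < d \<Longrightarrow> maxent_proj d $$ (k*d+l, k*d+l) = (if l = k then 1 / of_nat d else 0)"
  by (simp add: maxent_idx kdl mod_diag)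

lemma P_dd: "k < d \<Longrightarrow> k' < d \<Longrightarrow> maxent_proj d $$ (k*d+k, k'*d+k') = 1 / of_nat d"
  using mod_diag[of k d k] mod_diag[of k' d k'] by (simp add: maxent_idx kdl)

lemma kk_inj: "(k*d+k = k'*d+(k'::nat)) = (k = k')"
proof -
  have e: "k*d+k = Suc d * k" "k'*d+k' = Suc d * k'" by simp_all
  show ?thesis unfolding e by (rule mult_left_cancel) simp
qed

lemma t1_P: "0 < d \<Longrightarrow> t1 d (maxent_proj d) = 1"
proof -
  assume d: "0 < d"
  have "t1 d (maxent_proj d) = (\<Sum>k<d. \<Sum>l<d. if l = k then 1 / of_nat d else 0)"
    unfolding t1_def by (intro sum.cong refl) (simp add: P_diag)
  also have "\<dots> = of_nat d * (1 / of_nat d)" by simp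
  also have "\<dots> = 1" using d by simp
  finally show ?thesis .
qed

lemma t2_P: "0 < d \<Longrightarrow> t2 d (maxent_proj d) = of_nat d"
proof -
  assume d: "0 < d"
  have "t2 d (maxent_proj d) = (\<Sum>k<d. \<Sum>k'<d. 1 / of_nat d)"
    unfolding t2_def by (intro sum.cong refl) (simp add: P_dd)
  also have "\<dots> = of_nat d * (of_nat d * (1 / of_nat d))" by simp
  also have "\<dots> = of_nat d" using d by simp
  finally show ?thesis .
qed

lemma dd1: "2 \<le> d \<Longrightarrow> (of_nat (d*d) - 1 :: complex) \<noteq> 0"
proof
  assume d: "2 \<le> d" and e: "(of_nat (d*d) - 1 :: complex) = 0"
  then have "(of_nat (d*d) :: complex) = of_nat 1" by simp
  then have "d*d = 1" by (simp only: of_nat_eq_iff)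
  moreover have "d*d \<ge> 2*2" using d by (intro mult_le_mono) auto
  ultimately show False by simp
qed

lemma t1_Q: "2 \<le> d \<Longrightarrow> t1 d (Qtilde d) = 1"
proof -
  assume d: "2 \<le> d"
  have S: "(\<Sum>k<d. \<Sum>l<d. (1 - (if l = k then 1 / of_nat d else 0))) = (of_nat (d*d) - 1 :: complex)"
  proof -
    have i: "(\<Sum>l<d. (1 - (if l = k then 1 / of_nat d else 0))) = of_nat d - 1 / (of_nat d :: complex)" if "k < d" for k
      using that by (simp add: sum_subtractf)
    have "(\<Sum>k<d. \<Sum>l<d. (1 - (if l = k then 1 / of_nat d else 0))) = (\<Sum>k<d. of_nat d - 1 / (of_nat d :: complex))"
      using i by (intro sum.cong refl) auto
    also have "\<dots> = of_nat d * (of_nat d - 1 / of_nat d)" by simp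
    also have "\<dots> = of_nat (d*d) - 1" using d by (simp add: field_simps)
    finally show ?thesis .
  qed
  have "t1 d (Qtilde d) = (\<Sum>k<d. \<Sum>l<d. (1 / (of_nat (d*d) - 1)) * (1 - (if l = k then 1 / of_nat d else 0)))"
    unfolding t1_def by (intro sum.cong refl) (simp add: Qtilde_idx kdl P_diag)
  also have "\<dots> = (1 / (of_nat (d*d) - 1)) * (\<Sum>k<d. \<Sum>l<d. (1 - (if l = k then 1 / of_nat d else 0)))"
    by (simp only: sum_distrib_left)
  also have "\<dots> = (1 / (of_nat (d*d) - 1)) * (of_nat (d*d) - 1)" unfolding S ..
  also have "\<dots> = 1" using dd1[OF d] by (simp del: of_nat_mult)
  finally show ?thesis .
qed

lemma t2_Q: "2 \<le> d \<Longrightarrow> t2 d (Qtilde d) = 0"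
proof -
  assume d: "2 \<le> d"
  have "t2 d (Qtilde d) = (\<Sum>k<d. \<Sum>k'<d. (1 / (of_nat (d*d) - 1)) * ((if k' = k then 1 else 0) - 1 / of_nat d))"
    unfolding t2_def by (intro sum.cong refl) (auto simp: Qtilde_idx kdl P_dd kk_inj)
  also have "\<dots> = (1 / (of_nat (d*d) - 1)) * (\<Sum>k<d. \<Sum>k'<d. ((if k' = k then 1 else 0) - 1 / of_nat d))"
    by (simp only: sum_distrib_left)
  also have "(\<Sum>k<d. \<Sum>k'<d. ((if k' = k then 1 else 0) - 1 / of_nat d)) = (0::complex)"
  proof -
    have i: "(\<Sum>k'<d. ((if k' = k then 1 else 0) - 1 / of_nat d)) = (0::complex)" if "k < d" for k
      using that d by (simp add: sum_subtractf)
    show ?thesis using i by (intro sum.neutral) auto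
  qed
  finally show ?thesis by simp
qed


lemma pq_bound: "p < 4 \<Longrightarrow> q < d*d \<Longrightarrow> p*(d*d)+q < 4*(d*(d::nat))"
proof -
  assume a: "p < 4" "q < d*d"
  have "p*(d*d)+q < p*(d*d) + d*d" using a by simp
  also have "\<dots> = (p+1)*(d*d)" by simp
  also have "\<dots> \<le> 4*(d*d)" using a by (intro mult_right_mono) auto
  finally show ?thesis .
qed

lemma dims_simps[simp]:
  "dim_row (maxent_proj n) = n*n" "dim_col (maxent_proj n) = n*n"
  "dim_row (Qtilde n) = n*n" "dim_col (Qtilde n) = n*n"
  "dim_row (kron A B) = dim_row A * dim_row B" "dim_col (kron A B) = dim_col A * dim_col B"
  using maxent_carrier[of n] Qtilde_carrier[of n] unfolding kron_def by auto


lemma phi_rho: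
  assumes d: "3 \<le> d"
  shows "phiF d (\<lambda>rc. rho d x y z $$ rc) = complex_of_real (2*x + 2*z - real d * z)"
proof -
  define K where "K = (\<lambda>X Y rc. kron X Y $$ (reorder_idx 2 d (fst rc), reorder_idx 2 d (snd rc)))"
  have "phiF d (\<lambda>rc. rho d x y z $$ rc) = phiF d (\<lambda>rc. ((K (Qtilde 2) (Qtilde d) rc
      + complex_of_real x * K (maxent_proj 2) (Qtilde d) rc)
      + complex_of_real y * K (Qtilde 2) (maxent_proj d) rc)
      + complex_of_real z * K (maxent_proj 2) (maxent_proj d) rc)"
  proof (rule phiF_cong2)
    fix a a' k l k' l' :: nat
    assume h: "a < 2" "a' < 2" "k < d" "l < d" "k' < d" "l' < d"
    have rb: "(a*d+k)*(2*d)+(a*d+l) < 2*d*(2*d)" "(a'*d+k')*(2*d)+(a'*d+l') < 2*d*(2*d)"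
      using idx_bound h by auto
    have ri: "reorder_idx 2 d ((a*d+k)*(2*d)+(a*d+l)) = (a*2+a)*(d*d)+(k*d+l)"
         "reorder_idx 2 d ((a'*d+k')*(2*d)+(a'*d+l')) = (a'*2+a')*(d*d)+(k'*d+l')"
      using reorder_idx_eq h by auto
    have pb: "(a*2+a)*(d*d)+(k*d+l) < 4*(d*d)" "(a'*2+a')*(d*d)+(k'*d+l') < 4*(d*d)"
      using pq_bound kdl h by auto
    show "rho d x y z $$ ((a*d+k)*(2*d)+(a*d+l), (a'*d+k')*(2*d)+(a'*d+l')) =
      ((K (Qtilde 2) (Qtilde d) ((a*d+k)*(2*d)+(a*d+l), (a'*d+k')*(2*d)+(a'*d+l'))
      + complex_of_real x * K (maxent_proj 2) (Qtilde d) ((a*d+k)*(2*d)+(a*d+l), (a'*d+k')*(2*d)+(a'*d+l')))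
      + complex_of_real y * K (Qtilde 2) (maxent_proj d) ((a*d+k)*(2*d)+(a*d+l), (a'*d+k')*(2*d)+(a'*d+l')))
      + complex_of_real z * K (maxent_proj 2) (maxent_proj d) ((a*d+k)*(2*d)+(a*d+l), (a'*d+k')*(2*d)+(a'*d+l'))"
      unfolding rho_def reorder_def K_def using rb pb by (simp add: ri)
  qed
  also have "\<dots> = (phiF d (K (Qtilde 2) (Qtilde d)) + complex_of_real x * phiF d (K (maxent_proj 2) (Qtilde d)))
      + complex_of_real y * phiF d (K (Qtilde 2) (maxent_proj d)) + complex_of_real z * phiF d (K (maxent_proj 2) (maxent_proj d))"
    by (simp only: phiF_add phiF_scale)
  also have "\<dots> = complex_of_real (2*x + 2*z - real d * z)"
  proof -
    have c1: "Qtilde 2 \<in> carrier_mat 4 4" "maxent_proj 2 \<in> carrier_mat 4 4"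
      using Qtilde_carrier[of 2] maxent_carrier[of 2] by auto
    have c2: "Qtilde d \<in> carrier_mat (d*d) (d*d)" "maxent_proj d \<in> carrier_mat (d*d) (d*d)"
      using Qtilde_carrier maxent_carrier by auto
    have d0: "0 < d" "2 \<le> d" using d by auto
    show ?thesis unfolding K_def
      by (simp add: phi_rk c1 c2 sX_P2 sX_Q2 t1_P t2_P t1_Q t2_Q d0) (simp add: algebra_simps)
  qed
  finally show ?thesis .
qed

theorem mainTheorem4:
  fixes d :: nat and x y z :: real
  assumes "d \<ge> 3" and "x \<ge> 0" and "y \<ge> 0" and "z \<ge> 0"
    and "z > 2 * x / (real d - 2)"
  shows "\<not> separable (2 * d) (2 * d) (rho d x y z)"
proof
  assume "separable (2 * d) (2 * d) (rho d x y z)"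
  then have ex: "\<exists>(K::nat) (p :: nat \<Rightarrow> real) (A :: nat \<Rightarrow> complex mat) (B :: nat \<Rightarrow> complex mat).
        (\<forall>j<K. 0 \<le> p j \<and> A j \<in> carrier_mat (2*d) (2*d) \<and> psd (A j)
                 \<and> B j \<in> carrier_mat (2*d) (2*d) \<and> psd (B j)) \<and>
        rho d x y z = mat (2*d*(2*d)) (2*d*(2*d))
              (\<lambda>rc. \<Sum>j<K. complex_of_real (p j) * kron (A j) (B j) $$ rc)"
    unfolding separable_def by (rule conjunct2[THEN conjunct2])
  then obtain K :: nat and p :: "nat \<Rightarrow> real" and A B :: "nat \<Rightarrow> complex mat" where
    HE: "(\<forall>j<K. 0 \<le> p j \<and> A j \<in> carrier_mat (2*d) (2*d) \<and> psd (A j) \<and> B j \<in> carrier_mat (2*d) (2*d) \<and> psd (B j))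
       \<and> rho d x y z = mat (2*d*(2*d)) (2*d*(2*d)) (\<lambda>rc. \<Sum>j<K. complex_of_real (p j) * kron (A j) (B j) $$ rc)"
    by (elim exE) (rule that)
  have H: "\<forall>j<K. 0 \<le> p j \<and> A j \<in> carrier_mat (2*d) (2*d) \<and> psd (A j) \<and> B j \<in> carrier_mat (2*d) (2*d) \<and> psd (B j)"
    using HE by (rule conjunct1)
  have eq: "rho d x y z = mat (2*d*(2*d)) (2*d*(2*d)) (\<lambda>rc. \<Sum>j<K. complex_of_real (p j) * kron (A j) (B j) $$ rc)"
    using HE by (rule conjunct2)
  have d0: "0 < d" using assms(1) by simp
  have "phiF d (\<lambda>rc. rho d x y z $$ rc) = phiF d (\<lambda>rc. \<Sum>j<K. complex_of_real (p j) * kron (A j) (B j) $$ rc)"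
    by (rule phiF_cong) (simp add: eq)
  also have "\<dots> = (\<Sum>j<K. phiF d (\<lambda>rc. complex_of_real (p j) * kron (A j) (B j) $$ rc))"
    by (rule phiF_sum)
  also have "\<dots> = (\<Sum>j<K. complex_of_real (p j) * phiF d (\<lambda>rc. kron (A j) (B j) $$ rc))"
    by (simp only: phiF_scale)
  finally have e: "phiF d (\<lambda>rc. rho d x y z $$ rc) = (\<Sum>j<K. complex_of_real (p j) * phiF d (\<lambda>rc. kron (A j) (B j) $$ rc))" .
  have "0 \<le> Re (\<Sum>j<K. complex_of_real (p j) * phiF d (\<lambda>rc. kron (A j) (B j) $$ rc))"
    unfolding Re_sum
  proof (intro sum_nonneg)
    fix j assume "j \<in> {..<K}"
    then have j: "0 \<le> p j" "A j \<in> carrier_mat (2*d) (2*d)" "psd (A j)" "B j \<in> carrier_mat (2*d) (2*d)" "psd (B j)"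
      using H by auto
    have "0 \<le> Re (phiF d (\<lambda>rc. kron (A j) (B j) $$ rc))"
      by (rule phi_kron_nonneg[OF d0 j(2) j(4) j(3) j(5)])
    then show "0 \<le> Re (complex_of_real (p j) * phiF d (\<lambda>rc. kron (A j) (B j) $$ rc))"
      using j(1) by simp
  qed
  then have "0 \<le> Re (phiF d (\<lambda>rc. rho d x y z $$ rc))" unfolding e .
  moreover have "Re (phiF d (\<lambda>rc. rho d x y z $$ rc)) = 2*x + 2*z - real d * z"
    unfolding phi_rho[OF assms(1)] by (rule Re_complex_of_real)
  ultimately have nn: "0 \<le> 2*x + 2*z - real d * z" by simp
  have dpos: "real d - 2 > 0" using assms(1) by simp
  have "z * (real d - 2) > 2 * x" using assms(5) dpos by (simp add: divide_less_eq)
  then show False using nn by (simp add: algebra_simps)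
qed

end
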